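(* Let $\mathcal A_+=\{a_1,\dots,a_k\},\ \mathcal A_-=\{b_1,\dots,b_m\}\subseteq\mathbb Z^n$ be disjoint nonempty finite sets with $\mathcal A=\mathcal A_+\cup\mathcal A_-$ full dimensional and $(\mathcal A_+,\mathcal A_-)$ nonseparable. Let $F$ be its critical system, $h:\mathcal A\to\mathbb Z$ a height function lifting $\mathcal A_-$, and $f\in\mathcal S(\mathcal A_+,\mathcal A_-)$ with nonsigned coefficients $c\in\mathbb R^{\mathcal A}_{>0}$. Let $\lambda_1,\dots,\lambda_k>0$ with $\sum_i\lambda_i=1$ and $\sum_i\lambda_ia_i=b_1$, and define $\hat c\in\mathbb R^{\mathcal A}_{\ge0}$ by $\hat c_{a_i}=\lambda_i$, $\hat c_{b_1}=1$, $\hat c_{b_j}=0$ for $j\ge2$. Let $H(s,(t,x))=F((sc+(1-s)\hat c)\star t^h,x)$ for $s\in[0,1]$. Then $H(0,(1,\mathbb 1))=0$, and there is a unique continuous path $s\mapsto(t(s),x(s))\in\mathbb R^{n+1}_{>0}$, $s\in[0,1]$, with $(t(0),x(0))=(1,\mathbb 1)$ and $H(s,(t(s),x(s)))=0$ for all $s$; its endpoint $(t_*,x_* )=(t(1),x(1))$ satisfies $S=\{t_*\}$, where $S=\{t\in\mathbb R_{>0}:F(c\star t^h,x)=0\text{ for some }x\in\mathbb R^n_{>0}\}$.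
   Context: For a coefficient vector $c\in\mathbb R^{\mathcal A}$, $f_c(x)=\sum_{a\in\mathcal A_+}c_ax^a-\sum_{b\in\mathcal A_-}c_bx^b$; $\mathcal S(\mathcal A_+,\mathcal A_-)$ is the set of these with $c\in\mathbb R^{\mathcal A}_{>0}$ (nonsigned coefficients). The critical system is $F(c,x)=(f_c(x),x_1\partial_{x_1}f_c(x),\dots,x_n\partial_{x_n}f_c(x))$. Full dimensional: $\dim\operatorname{conv}(\mathcal A)=n$. $\mathcal F(\mathcal A_+)$ is the common refinement of all regular polyhedral subdivisions of $\mathcal A_+$, $\mathcal F_n(\mathcal A_+)$ its $n$-cells; $(\mathcal A_+,\mathcal A_-)$ is nonseparable if $\mathcal A_-\subseteq\operatorname{relint}\operatorname{conv}(\mathcal A_+)$ and some $D\in\mathcal F_n(\mathcal A_+)$ contains $\mathcal A_-$. A height function $h$ lifts $\mathcal A_-$ if $h(a)>0$ for $a\in\mathcal A_-$ and $h(a)=0$ for $a\in\mathcal A_+$; $c\star t^h=(c_at^{h(a)})_a$; $\mathbb 1=(1,\dots,1)$. *)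

theory Defs
  imports "HOL-Analysis.Analysis"
begin

text \<open>Exponent vectors live in int^'n (so n = CARD('n)); points x live in real^'n.\<close>

definition rv :: "int ^ 'n \<Rightarrow> real ^ 'n" where
  "rv a = (\<chi> i. real_of_int (a $ i))"

definition monom_val :: "real ^ 'n \<Rightarrow> int ^ 'n \<Rightarrow> real" where
  "monom_val x a = (\<Prod>j\<in>UNIV. (x $ j) powi (a $ j))"

definition fpoly :: "(int ^ 'n) set \<Rightarrow> (int ^ 'n) set \<Rightarrow> (int ^ 'n \<Rightarrow> real) \<Rightarrow> real ^ 'n \<Rightarrow> real" where
  "fpoly Ap Am c x = (\<Sum>a\<in>Ap. c a * monom_val x a) - (\<Sum>b\<in>Am. c b * monom_val x b)"

definition xi_dfpoly :: "(int ^ 'n) set \<Rightarrow> (int ^ 'n) set \<Rightarrow> (int ^ 'n \<Rightarrow> real) \<Rightarrow> real ^ 'n \<Rightarrow> 'n \<Rightarrow> real" where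
  "xi_dfpoly Ap Am c x i =
     x $ i * deriv (\<lambda>y. fpoly Ap Am c (\<chi> j. if j = i then y else x $ j)) (x $ i)"

definition crit_sys :: "(int ^ 'n) set \<Rightarrow> (int ^ 'n) set \<Rightarrow> (int ^ 'n \<Rightarrow> real) \<Rightarrow> real ^ 'n \<Rightarrow> real \<times> (real ^ 'n)" where
  "crit_sys Ap Am c x = (fpoly Ap Am c x, \<chi> i. xi_dfpoly Ap Am c x i)"

definition star_pow :: "(int ^ 'n \<Rightarrow> real) \<Rightarrow> real \<Rightarrow> (int ^ 'n \<Rightarrow> int) \<Rightarrow> int ^ 'n \<Rightarrow> real" where
  "star_pow c t h = (\<lambda>a. c a * t powi h a)"

text \<open>Cells of the regular polyhedral subdivision of A+ induced by heights w:
  conv(sigma) where sigma is the set of points on a lower face of the lifted configuration.\<close>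
definition regular_cells :: "(int ^ 'n) set \<Rightarrow> (int ^ 'n \<Rightarrow> real) \<Rightarrow> (real ^ 'n) set set" where
  "regular_cells Ap w =
     {convex hull (rv ` \<sigma>) | \<sigma>. \<sigma> \<subseteq> Ap \<and> \<sigma> \<noteq> {} \<and>
        (\<exists>u u0. (\<forall>a\<in>Ap. u \<bullet> rv a + u0 \<le> w a) \<and> \<sigma> = {a\<in>Ap. u \<bullet> rv a + u0 = w a})}"

definition common_refinement :: "(int ^ 'n) set \<Rightarrow> (real ^ 'n) set set" where
  "common_refinement Ap =
     {D. D \<noteq> {} \<and> (\<exists>C. (\<forall>w. C w \<in> regular_cells Ap w) \<and> D = (\<Inter>w. C w))}"

definition common_refinement_ncells :: "(int ^ 'n) set \<Rightarrow> (real ^ 'n) set set" where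
  "common_refinement_ncells Ap = {D \<in> common_refinement Ap. aff_dim D = int CARD('n)}"

definition nonseparable :: "(int ^ 'n) set \<Rightarrow> (int ^ 'n) set \<Rightarrow> bool" where
  "nonseparable Ap Am \<longleftrightarrow>
     rv ` Am \<subseteq> rel_interior (convex hull (rv ` Ap)) \<and>
     (\<exists>D\<in>common_refinement_ncells Ap. rv ` Am \<subseteq> D)"

definition full_dimensional :: "(int ^ 'n) set \<Rightarrow> bool" where
  "full_dimensional A \<longleftrightarrow> aff_dim (convex hull (rv ` A)) = int CARD('n)"

definition lifts :: "(int ^ 'n) set \<Rightarrow> (int ^ 'n) set \<Rightarrow> (int ^ 'n \<Rightarrow> int) \<Rightarrow> bool" where
  "lifts Ap Am h \<longleftrightarrow> (\<forall>a\<in>Am. h a > 0) \<and> (\<forall>a\<in>Ap. h a = 0)"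

end

theory Submission
  imports Defs
begin


definition E :: "real^'n::finite \<Rightarrow> real^'n" where "E y = (\<chi> j. exp (y $ j))"
definition Lg :: "real^'n::finite \<Rightarrow> real^'n" where "Lg x = (\<chi> j. ln (x $ j))"

lemma E_Lg: "(\<forall>j. x$j > 0) \<Longrightarrow> E (Lg x) = x"
  by (simp add: E_def Lg_def vec_eq_iff)
lemma Lg_E: "Lg (E y) = y"
  by (simp add: E_def Lg_def vec_eq_iff)
lemma E_pos: "E y $ j > 0"
  by (simp add: E_def)
lemma E_0: "E 0 = (\<chi> i. 1)"
  by (simp add: E_def vec_eq_iff)

lemma rv_inner: "rv a \<bullet> y = (\<Sum>j\<in>UNIV. real_of_int (a$j) * y$j)"
  by (simp add: rv_def inner_vec_def)

lemma monom_E: "monom_val (E y) a = exp (rv a \<bullet> y)"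
  unfolding monom_val_def E_def rv_inner
  by (simp add: exp_power_int exp_sum)

lemma rv_comp: "rv a $ i = real_of_int (a $ i)"
  by (simp add: rv_def)




lemma monom_upd: "monom_val (\<chi> j. if j = i then z else x$j) a
   = z powi (a$i) * (\<Prod>j\<in>UNIV-{i}. x$j powi (a$j))"
proof -
  have "monom_val (\<chi> j. if j = i then z else x$j) a
     = z powi (a$i) * (\<Prod>j\<in>UNIV-{i}. (\<chi> j. if j = i then z else x$j) $ j powi (a$j))"
    unfolding monom_val_def by (subst prod.remove[of UNIV i]) auto
  also have "(\<Prod>j\<in>UNIV-{i}. (\<chi> j. if j = i then z else x$j) $ j powi (a$j)) = (\<Prod>j\<in>UNIV-{i}. x$j powi (a$j))"
    by (rule prod.cong) auto
  finally show ?thesis .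
qed

lemma monom_split: "monom_val x a = x$i powi (a$i) * (\<Prod>j\<in>UNIV-{i}. x$j powi (a$j))"
proof -
  have "(\<chi> j. if j = i then x$i else x$j) = x" by (simp add: vec_eq_iff)
  then show ?thesis using monom_upd[of i "x$i" x a] by simp
qed

lemma monom_deriv:
  assumes "x$i \<noteq> 0"
  shows "((\<lambda>z. monom_val (\<chi> j. if j = i then z else x$j) a) has_real_derivative
          (of_int (a$i) * monom_val x a / x$i)) (at (x$i))"
proof -
  let ?K = "(\<Prod>j\<in>UNIV-{i}. x$j powi (a$j))"
  have "((\<lambda>z. z powi (a$i) * ?K) has_real_derivative (of_int (a$i) * x$i powi (a$i - 1) * 1 * ?K)) (at (x$i))"
    using assms by (intro DERIV_cmult_right DERIV_power_int DERIV_ident) auto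
  moreover have "of_int (a$i) * x$i powi (a$i - 1) * 1 * ?K = of_int (a$i) * monom_val x a / x$i"
    using assms by (simp add: monom_split[of x a i] power_int_diff)
  ultimately show ?thesis by (simp add: monom_upd)
qed

lemma fpoly_deriv:
  assumes "x$i \<noteq> 0"
  shows "((\<lambda>z. fpoly Ap Am c (\<chi> j. if j = i then z else x$j)) has_real_derivative
     ((\<Sum>a\<in>Ap. c a * of_int (a$i) * monom_val x a) - (\<Sum>b\<in>Am. c b * of_int (b$i) * monom_val x b)) / x$i) (at (x$i))"
proof -
  have "((\<lambda>z. fpoly Ap Am c (\<chi> j. if j = i then z else x$j)) has_real_derivative
     ((\<Sum>a\<in>Ap. c a * (of_int (a$i) * monom_val x a / x$i)) - (\<Sum>b\<in>Am. c b * (of_int (b$i) * monom_val x b / x$i)))) (at (x$i))"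
    unfolding fpoly_def
    by (intro DERIV_diff DERIV_sum DERIV_cmult monom_deriv assms)
  moreover have "((\<Sum>a\<in>Ap. c a * (of_int (a$i) * monom_val x a / x$i)) - (\<Sum>b\<in>Am. c b * (of_int (b$i) * monom_val x b / x$i)))
     = ((\<Sum>a\<in>Ap. c a * of_int (a$i) * monom_val x a) - (\<Sum>b\<in>Am. c b * of_int (b$i) * monom_val x b)) / x$i"
    by (simp add: sum_divide_distrib diff_divide_distrib mult.assoc)
  ultimately show ?thesis by simp
qed

lemma xi_df:
  assumes "x$i \<noteq> 0"
  shows "xi_dfpoly Ap Am c x i = (\<Sum>a\<in>Ap. c a * of_int (a$i) * monom_val x a) - (\<Sum>b\<in>Am. c b * of_int (b$i) * monom_val x b)"
  unfolding xi_dfpoly_def using DERIV_imp_deriv[OF fpoly_deriv[OF assms]] assms by simp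

lemma xi_df_vec:
  assumes "\<forall>i. x$i \<noteq> 0"
  shows "(\<chi> i. xi_dfpoly Ap Am c x i) = (\<Sum>a\<in>Ap. (c a * monom_val x a) *\<^sub>R rv a) - (\<Sum>b\<in>Am. (c b * monom_val x b) *\<^sub>R rv b)"
  using assms by (simp add: vec_eq_iff xi_df rv_comp mult_ac)

lemma crit_sys_eq:
  assumes "\<forall>i. x$i \<noteq> 0"
  shows "crit_sys Ap Am c x = 0 \<longleftrightarrow> fpoly Ap Am c x = 0 \<and>
     (\<Sum>a\<in>Ap. (c a * monom_val x a) *\<^sub>R rv a) = (\<Sum>b\<in>Am. (c b * monom_val x b) *\<^sub>R rv b)"
  unfolding crit_sys_def xi_df_vec[OF assms] by (simp add: zero_prod_def)




lemma conv_phi: "convex_on UNIV (\<lambda>z. exp (z \<bullet> y) - (u \<bullet> z + u0))"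
proof (rule convex_onI)
  fix t :: real and x z :: "'a::real_inner"
  assume t: "t > 0" "t < 1"
  have e1: "exp (((1-t) *\<^sub>R x + t *\<^sub>R z) \<bullet> y) = exp ((1-t)*(x\<bullet>y) + t*(z\<bullet>y))"
    by (simp add: inner_add_left)
  have e2: "exp ((1-t)*(x\<bullet>y) + t*(z\<bullet>y)) \<le> (1-t)*exp(x\<bullet>y) + t*exp(z\<bullet>y)"
    using convex_onD[OF exp_convex, of t "x\<bullet>y" "z\<bullet>y"] t by simp
  have e3: "u \<bullet> ((1-t) *\<^sub>R x + t *\<^sub>R z) + u0 = (1-t)*(u\<bullet>x+u0) + t*(u\<bullet>z+u0)"
    by (simp add: inner_add_right algebra_simps)
  show "exp (((1 - t) *\<^sub>R x + t *\<^sub>R z) \<bullet> y) - (u \<bullet> ((1 - t) *\<^sub>R x + t *\<^sub>R z) + u0)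
         \<le> (1 - t) * (exp (x \<bullet> y) - (u \<bullet> x + u0)) + t * (exp (z \<bullet> y) - (u \<bullet> z + u0))"
    using e1 e2 e3 by (simp add: algebra_simps)
qed simp

lemma hull_exp_le:
  assumes "z \<in> convex hull S" "\<forall>v\<in>S. exp (v \<bullet> y) \<le> u \<bullet> v + u0"
  shows "exp (z \<bullet> y) \<le> u \<bullet> z + u0"
proof -
  have "convex_on (convex hull S) (\<lambda>z. exp (z \<bullet> y) - (u \<bullet> z + u0))"
    by (rule convex_on_subset[OF conv_phi]) (auto simp: convex_convex_hull)
  from convex_on_convex_hull_bound[OF this, of 0] assms show ?thesis by auto
qed

lemma exp_strict: "(d::real) \<noteq> 0 \<Longrightarrow> 1 + d < exp d"
proof (cases "1 + d/2 < 0")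
  case True
  then have "1 + d < 0" by simp
  then show ?thesis using exp_gt_zero[of d] by linarith
next
  case False
  have "exp d = exp (d/2) * exp (d/2)" by (simp flip: exp_add)
  also have "\<dots> \<ge> (1 + d/2) * (1 + d/2)"
    using False exp_ge_add_one_self[of "d/2"] by (intro mult_mono) auto
  finally have "exp d \<ge> 1 + d + d*d/4" by (simp add: algebra_simps)
  moreover assume "d \<noteq> 0"
  then have "d*d > 0" by (auto simp: zero_less_mult_iff linorder_neq_iff)
  ultimately show ?thesis by linarith
qed

lemma exp_tangent: "exp (m::real) * (1 + v - m) \<le> exp v"
proof -
  have "exp m * (1 + (v - m)) \<le> exp m * exp (v - m)"
    by (intro mult_left_mono) auto
  moreover have "exp m * exp (v - m) = exp v" by (simp add: exp_diff)
  moreover have "1 + v - m = 1 + (v - m)" by simp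
  ultimately show ?thesis by (metis add_diff_eq)
qed

lemma exp_tangent_eq: "exp (m::real) * (1 + v - m) = exp v \<Longrightarrow> v = m"
proof (rule ccontr)
  assume "v \<noteq> m" "exp m * (1 + v - m) = exp v"
  then have "exp m * (1 + (v - m)) < exp m * exp (v - m)"
    using exp_strict[of "v - m"] by (intro mult_strict_left_mono) auto
  moreover have "exp m * exp (v - m) = exp v" by (simp add: exp_diff)
  moreover have "1 + v - m = 1 + (v - m)" by simp
  ultimately show False using \<open>exp m * (1 + v - m) = exp v\<close> by (metis add_diff_eq less_irrefl)
qed

lemma affine_sum_id:
  fixes rv' :: "'b \<Rightarrow> 'a::real_inner"
  shows "(\<Sum>b\<in>B. \<beta> b * (u \<bullet> rv' b + u0)) = u \<bullet> (\<Sum>b\<in>B. \<beta> b *\<^sub>R rv' b) + u0 * sum \<beta> B"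
  by (simp add: inner_sum_right sum.distrib sum_distrib_left sum_distrib_right algebra_simps)

locale setup4 =
  fixes Ap Am :: "(int ^ 'n::finite) set" and h :: "int ^ 'n \<Rightarrow> int"
    and lam :: "int ^ 'n \<Rightarrow> real" and b1 :: "int ^ 'n"
  assumes finAp: "finite Ap" and finAm: "finite Am" and neAp: "Ap \<noteq> {}" and disj: "Ap \<inter> Am = {}"
    and fd: "full_dimensional (Ap \<union> Am)" and ns: "nonseparable Ap Am" and lf: "lifts Ap Am h"
    and b1: "b1 \<in> Am" and lam_pos: "\<forall>a\<in>Ap. lam a > 0" and lam_sum: "(\<Sum>a\<in>Ap. lam a) = 1"
    and lam_b1: "(\<Sum>a\<in>Ap. lam a *\<^sub>R rv a) = rv b1"
begin

definition g :: "(int ^ 'n \<Rightarrow> real) \<Rightarrow> real \<Rightarrow> real ^ 'n \<Rightarrow> real" where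
  "g C t y = (\<Sum>a\<in>Ap. C a * exp (rv a \<bullet> y)) - (\<Sum>b\<in>Am. C b * t ^ nat (h b) * exp (rv b \<bullet> y))"

definition grad :: "(int ^ 'n \<Rightarrow> real) \<Rightarrow> real \<Rightarrow> real ^ 'n \<Rightarrow> real ^ 'n" where
  "grad C t y = (\<Sum>a\<in>Ap. (C a * exp (rv a \<bullet> y)) *\<^sub>R rv a) - (\<Sum>b\<in>Am. (C b * t ^ nat (h b) * exp (rv b \<bullet> y)) *\<^sub>R rv b)"

definition solL :: "(int ^ 'n \<Rightarrow> real) \<Rightarrow> real \<Rightarrow> real ^ 'n \<Rightarrow> bool" where
  "solL C t y \<longleftrightarrow> t > 0 \<and> g C t y = 0 \<and> grad C t y = 0"

lemma hA: "a \<in> Ap \<Longrightarrow> h a = 0" and hB: "b \<in> Am \<Longrightarrow> h b > 0"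
  using lf by (auto simp: lifts_def)

lemma star_Ap: "a \<in> Ap \<Longrightarrow> star_pow C t h a = C a"
  by (simp add: star_pow_def hA)
lemma star_Am: "b \<in> Am \<Longrightarrow> star_pow C t h b = C b * t ^ nat (h b)"
  using hB[of b] by (simp add: star_pow_def power_int_def)

lemma fpoly_E: "fpoly Ap Am (star_pow C t h) (E y) = g C t y"
  unfolding fpoly_def g_def monom_E
  by (intro arg_cong2[where f="(-)"] sum.cong) (auto simp: star_Ap star_Am)

lemma crit_E: "crit_sys Ap Am (star_pow C t h) (E y) = 0 \<longleftrightarrow> g C t y = 0 \<and> grad C t y = 0"
proof -
  have nz: "\<forall>i. E y $ i \<noteq> 0" using E_pos by (metis less_irrefl)
  have "(\<Sum>a\<in>Ap. (star_pow C t h a * monom_val (E y) a) *\<^sub>R rv a) = (\<Sum>a\<in>Ap. (C a * exp (rv a \<bullet> y)) *\<^sub>R rv a)"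
    by (rule sum.cong) (auto simp: star_Ap monom_E)
  moreover have "(\<Sum>b\<in>Am. (star_pow C t h b * monom_val (E y) b) *\<^sub>R rv b) = (\<Sum>b\<in>Am. (C b * t ^ nat (h b) * exp (rv b \<bullet> y)) *\<^sub>R rv b)"
    by (rule sum.cong) (auto simp: star_Am monom_E)
  ultimately show ?thesis
    unfolding crit_sys_eq[OF nz] fpoly_E grad_def by simp
qed

lemma keyA:
  assumes "\<forall>a\<in>Ap. \<alpha> a \<ge> 0" "\<forall>b\<in>Am. \<beta> b \<ge> 0" "sum \<alpha> Ap = sum \<beta> Am"
    "(\<Sum>a\<in>Ap. \<alpha> a *\<^sub>R rv a) = (\<Sum>b\<in>Am. \<beta> b *\<^sub>R rv b)"
  shows "(\<Sum>b\<in>Am. \<beta> b * exp (rv b \<bullet> y)) \<le> (\<Sum>a\<in>Ap. \<alpha> a * exp (rv a \<bullet> y))"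
proof -
  obtain D where D: "D \<in> common_refinement_ncells Ap" "rv ` Am \<subseteq> D"
    using ns by (auto simp: nonseparable_def)
  then obtain Cf where Cf: "\<forall>w. Cf w \<in> regular_cells Ap w" "D = (\<Inter>w. Cf w)"
    by (auto simp: common_refinement_ncells_def common_refinement_def)
  define w where "w = (\<lambda>a. exp (rv a \<bullet> y))"
  from Cf(1) have "Cf w \<in> regular_cells Ap w" by blast
  then obtain \<sigma> u u0 where s: "Cf w = convex hull (rv ` \<sigma>)" "\<sigma> \<subseteq> Ap"
      "\<forall>a\<in>Ap. u \<bullet> rv a + u0 \<le> w a" "\<sigma> = {a\<in>Ap. u \<bullet> rv a + u0 = w a}"
    unfolding regular_cells_def by blast
  have bnd: "exp (rv b \<bullet> y) \<le> u \<bullet> rv b + u0" if "b \<in> Am" for b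
  proof (rule hull_exp_le)
    show "rv b \<in> convex hull (rv ` \<sigma>)" using D(2) Cf(2) s(1) that by blast
    show "\<forall>v\<in>rv ` \<sigma>. exp (v \<bullet> y) \<le> u \<bullet> v + u0" using s(4) by (auto simp: w_def)
  qed
  have "(\<Sum>b\<in>Am. \<beta> b * exp (rv b \<bullet> y)) \<le> (\<Sum>b\<in>Am. \<beta> b * (u \<bullet> rv b + u0))"
    by (rule sum_mono) (use bnd assms(2) in \<open>auto intro: mult_left_mono\<close>)
  also have "\<dots> = (\<Sum>a\<in>Ap. \<alpha> a * (u \<bullet> rv a + u0))"
    unfolding affine_sum_id assms(3,4) ..
  also have "\<dots> \<le> (\<Sum>a\<in>Ap. \<alpha> a * exp (rv a \<bullet> y))"
    by (rule sum_mono) (use s(3) assms(1) in \<open>auto intro: mult_left_mono simp: w_def\<close>)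
  finally show ?thesis .
qed

lemma Am_hull: "b \<in> Am \<Longrightarrow> rv b \<in> convex hull (rv ` Ap)"
  using ns rel_interior_subset by (auto simp: nonseparable_def)

lemma keyB:
  assumes "\<forall>a\<in>Ap. \<alpha> a > 0" "\<forall>b\<in>Am. \<beta> b \<ge> 0" "\<beta> b1 > 0" "sum \<alpha> Ap = sum \<beta> Am"
    "(\<Sum>a\<in>Ap. \<alpha> a *\<^sub>R rv a) = (\<Sum>b\<in>Am. \<beta> b *\<^sub>R rv b)"
    and eq: "(\<Sum>b\<in>Am. \<beta> b * exp (rv b \<bullet> y)) = (\<Sum>a\<in>Ap. \<alpha> a * exp (rv a \<bullet> y))"
  shows "y = 0"
proof -
  obtain D where D: "D \<in> common_refinement_ncells Ap" "rv ` Am \<subseteq> D"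
    using ns by (auto simp: nonseparable_def)
  then obtain Cf where Cf: "\<forall>w. Cf w \<in> regular_cells Ap w" "D = (\<Inter>w. Cf w)"
    by (auto simp: common_refinement_ncells_def common_refinement_def)
  define w where "w = (\<lambda>a. exp (rv a \<bullet> y))"
  from Cf(1) have "Cf w \<in> regular_cells Ap w" by blast
  then obtain \<sigma> u u0 where s: "Cf w = convex hull (rv ` \<sigma>)" "\<sigma> \<subseteq> Ap"
      "\<forall>a\<in>Ap. u \<bullet> rv a + u0 \<le> w a" "\<sigma> = {a\<in>Ap. u \<bullet> rv a + u0 = w a}"
    unfolding regular_cells_def by blast
  have bnd: "exp (rv b \<bullet> y) \<le> u \<bullet> rv b + u0" if "b \<in> Am" for b
  proof (rule hull_exp_le)
    show "rv b \<in> convex hull (rv ` \<sigma>)" using D(2) Cf(2) s(1) that by blast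
    show "\<forall>v\<in>rv ` \<sigma>. exp (v \<bullet> y) \<le> u \<bullet> v + u0" using s(4) by (auto simp: w_def)
  qed
  let ?S1 = "(\<Sum>b\<in>Am. \<beta> b * exp (rv b \<bullet> y))"
  let ?S2 = "(\<Sum>b\<in>Am. \<beta> b * (u \<bullet> rv b + u0))"
  let ?S3 = "(\<Sum>a\<in>Ap. \<alpha> a * (u \<bullet> rv a + u0))"
  let ?S4 = "(\<Sum>a\<in>Ap. \<alpha> a * exp (rv a \<bullet> y))"
  have l1: "?S1 \<le> ?S2"
    by (rule sum_mono) (use bnd assms(2) in \<open>auto intro: mult_left_mono\<close>)
  have e23: "?S2 = ?S3"
    unfolding affine_sum_id assms(4,5) ..
  have l3: "?S3 \<le> ?S4"
    by (rule sum_mono) (use s(3) assms(1) in \<open>auto intro: mult_left_mono less_imp_le simp: w_def\<close>)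
  have "?S4 - ?S3 = 0" using l1 e23 l3 eq by linarith
  then have "(\<Sum>a\<in>Ap. \<alpha> a * (exp (rv a \<bullet> y) - (u \<bullet> rv a + u0))) = 0"
    by (simp add: sum_subtractf algebra_simps)
  then have "\<forall>a\<in>Ap. \<alpha> a * (exp (rv a \<bullet> y) - (u \<bullet> rv a + u0)) = 0"
    using s(3) assms(1) finAp by (subst sum_nonneg_eq_0_iff[symmetric]) (auto simp: w_def less_imp_le)
  then have wa: "\<forall>a\<in>Ap. exp (rv a \<bullet> y) = u \<bullet> rv a + u0"
  proof (intro ballI)
    fix a assume "a \<in> Ap" "\<forall>a\<in>Ap. \<alpha> a * (exp (rv a \<bullet> y) - (u \<bullet> rv a + u0)) = 0"
    then show "exp (rv a \<bullet> y) = u \<bullet> rv a + u0" using assms(1) by force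
  qed
  have "?S2 - ?S1 = 0" using l1 e23 l3 eq by linarith
  then have "(\<Sum>b\<in>Am. \<beta> b * ((u \<bullet> rv b + u0) - exp (rv b \<bullet> y))) = 0"
    by (simp add: sum_subtractf algebra_simps)
  then have "\<forall>b\<in>Am. \<beta> b * ((u \<bullet> rv b + u0) - exp (rv b \<bullet> y)) = 0"
    using bnd assms(2) finAm by (subst sum_nonneg_eq_0_iff[symmetric]) auto
  then have wb1: "exp (rv b1 \<bullet> y) = u \<bullet> rv b1 + u0"
    using b1 assms(3) by auto
  define m where "m = rv b1 \<bullet> y"
  have msum: "m = (\<Sum>a\<in>Ap. lam a * (rv a \<bullet> y))"
    unfolding m_def lam_b1[symmetric] by (simp add: inner_sum_left)
  have "u \<bullet> rv b1 + u0 = (\<Sum>a\<in>Ap. lam a * (u \<bullet> rv a + u0))"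
    unfolding affine_sum_id lam_b1 lam_sum by simp
  also have "\<dots> = (\<Sum>a\<in>Ap. lam a * exp (rv a \<bullet> y))"
    using wa by (intro sum.cong) auto
  finally have ex: "exp m = (\<Sum>a\<in>Ap. lam a * exp (rv a \<bullet> y))"
    using wb1 m_def by simp
  have idK: "(\<Sum>a\<in>Ap. lam a * (exp (rv a \<bullet> y) - K * (1 + rv a \<bullet> y - m)))
     = (\<Sum>a\<in>Ap. lam a * exp (rv a \<bullet> y)) - K * ((\<Sum>a\<in>Ap. lam a) + (\<Sum>a\<in>Ap. lam a * (rv a \<bullet> y)) - m * (\<Sum>a\<in>Ap. lam a))" for K
  proof -
    have "(\<Sum>a\<in>Ap. lam a * (exp (rv a \<bullet> y) - K * (1 + rv a \<bullet> y - m)))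
      = (\<Sum>a\<in>Ap. lam a * exp (rv a \<bullet> y) - K * (lam a + lam a * (rv a \<bullet> y) - m * lam a))"
      by (rule sum.cong) (simp_all add: algebra_simps)
    also have "\<dots> = (\<Sum>a\<in>Ap. lam a * exp (rv a \<bullet> y)) - K * (\<Sum>a\<in>Ap. (lam a + lam a * (rv a \<bullet> y) - m * lam a))"
      by (simp only: sum_subtractf[of "\<lambda>a. lam a * exp (rv a \<bullet> y)"] sum_distrib_left)
    also have "(\<Sum>a\<in>Ap. (lam a + lam a * (rv a \<bullet> y) - m * lam a)) = (\<Sum>a\<in>Ap. lam a) + (\<Sum>a\<in>Ap. lam a * (rv a \<bullet> y)) - m * (\<Sum>a\<in>Ap. lam a)"
      by (simp only: sum_subtractf sum.distrib sum_distrib_left)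
    finally show ?thesis .
  qed
  have "(\<Sum>a\<in>Ap. lam a * (exp (rv a \<bullet> y) - exp m * (1 + rv a \<bullet> y - m))) = 0"
    unfolding idK ex[symmetric] lam_sum msum[symmetric] by simp
  then have "\<forall>a\<in>Ap. lam a * (exp (rv a \<bullet> y) - exp m * (1 + rv a \<bullet> y - m)) = 0"
    using lam_pos finAp exp_tangent by (subst sum_nonneg_eq_0_iff[symmetric]) (auto intro: mult_nonneg_nonneg less_imp_le)
  then have ya: "\<forall>a\<in>Ap. rv a \<bullet> y = m"
  proof (intro ballI)
    fix a assume a: "a \<in> Ap" and z: "\<forall>a\<in>Ap. lam a * (exp (rv a \<bullet> y) - exp m * (1 + rv a \<bullet> y - m)) = 0"
    then have "lam a * (exp (rv a \<bullet> y) - exp m * (1 + rv a \<bullet> y - m)) = 0" by blast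
    moreover have "lam a \<noteq> 0" using lam_pos a by auto
    ultimately have "exp m * (1 + rv a \<bullet> y - m) = exp (rv a \<bullet> y)" by simp
    then show "rv a \<bullet> y = m" by (rule exp_tangent_eq)
  qed
  have sub: "convex hull (rv ` (Ap \<union> Am)) \<subseteq> {z. y \<bullet> z = m}"
  proof (rule hull_minimal)
    have "convex hull (rv ` Ap) \<subseteq> {z. y \<bullet> z = m}"
    proof (rule hull_minimal)
      show "rv ` Ap \<subseteq> {z. y \<bullet> z = m}" using ya by (auto simp: inner_commute)
    qed (rule convex_hyperplane)
    then show "rv ` (Ap \<union> Am) \<subseteq> {z. y \<bullet> z = m}"
      using Am_hull ya by (auto simp: inner_commute)
  qed (simp add: convex_hyperplane)
  show "y = 0"
  proof (rule ccontr)
    assume "y \<noteq> 0"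
    then have "aff_dim (convex hull (rv ` (Ap \<union> Am))) \<le> int CARD('n) - 1"
      using aff_dim_subset[OF sub] by simp
    then show False using fd by (simp add: full_dimensional_def)
  qed
qed

lemma shift_sum: "(\<Sum>b\<in>B. (K b * exp (rv b \<bullet> y0)) * exp (rv b \<bullet> (y - y0))) = (\<Sum>b\<in>B. K b * exp (rv b \<bullet> y))"
  by (intro sum.cong) (auto simp: inner_diff_right exp_diff)

lemma sol_parts:
  assumes "solL C t y0"
  shows "(\<Sum>a\<in>Ap. C a * exp (rv a \<bullet> y0)) = (\<Sum>b\<in>Am. C b * t ^ nat (h b) * exp (rv b \<bullet> y0))"
    "(\<Sum>a\<in>Ap. (C a * exp (rv a \<bullet> y0)) *\<^sub>R rv a) = (\<Sum>b\<in>Am. (C b * t ^ nat (h b) * exp (rv b \<bullet> y0)) *\<^sub>R rv b)"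
  using assms by (auto simp: solL_def g_def grad_def)

lemma sol_nonneg:
  assumes "\<forall>a\<in>Ap. C a \<ge> 0" "\<forall>b\<in>Am. C b \<ge> 0" "solL C t y0"
  shows "g C t y \<ge> 0"
proof -
  have t: "t > 0" using assms(3) by (simp add: solL_def)
  have "(\<Sum>b\<in>Am. (C b * t ^ nat (h b) * exp (rv b \<bullet> y0)) * exp (rv b \<bullet> (y - y0)))
     \<le> (\<Sum>a\<in>Ap. (C a * exp (rv a \<bullet> y0)) * exp (rv a \<bullet> (y - y0)))"
    by (rule keyA) (use assms t sol_parts[OF assms(3)] in auto)
  then show ?thesis unfolding shift_sum g_def by simp
qed

lemma g_strict_mono:
  assumes "\<forall>b\<in>Am. C b \<ge> 0" "C b1 > 0" "0 < t1" "t1 < t2"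
  shows "g C t2 y < g C t1 y"
proof -
  have "(\<Sum>b\<in>Am. C b * t1 ^ nat (h b) * exp (rv b \<bullet> y)) < (\<Sum>b\<in>Am. C b * t2 ^ nat (h b) * exp (rv b \<bullet> y))"
  proof (rule sum_strict_mono_ex1[OF finAm])
    show "\<forall>b\<in>Am. C b * t1 ^ nat (h b) * exp (rv b \<bullet> y) \<le> C b * t2 ^ nat (h b) * exp (rv b \<bullet> y)"
      using assms by (auto intro!: mult_right_mono mult_left_mono power_mono)
    have "t1 ^ nat (h b1) < t2 ^ nat (h b1)"
      using assms hB[OF b1] by (intro power_strict_mono) auto
    then show "\<exists>b\<in>Am. C b * t1 ^ nat (h b) * exp (rv b \<bullet> y) < C b * t2 ^ nat (h b) * exp (rv b \<bullet> y)"
      using b1 assms by (intro bexI[of _ b1]) auto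
  qed
  then show ?thesis by (simp add: g_def)
qed

lemma sol_unique_t:
  assumes "\<forall>a\<in>Ap. C a \<ge> 0" "\<forall>b\<in>Am. C b \<ge> 0" "C b1 > 0" "solL C t1 y1" "solL C t2 y2"
  shows "t1 = t2"
proof -
  have *: False if "solL C s1 z1" "solL C s2 z2" "s1 < s2" for s1 s2 z1 z2
  proof -
    have "g C s2 z1 \<ge> 0" by (rule sol_nonneg[OF assms(1,2) that(2)])
    moreover have "g C s2 z1 < g C s1 z1"
      using that assms by (intro g_strict_mono) (auto simp: solL_def)
    ultimately show False using that(1) by (simp add: solL_def)
  qed
  show ?thesis using *[OF assms(4,5)] *[OF assms(5,4)] by (meson linorder_neqE_linordered_idom)
qed

lemma sol_unique_y:
  assumes "\<forall>a\<in>Ap. C a > 0" "\<forall>b\<in>Am. C b \<ge> 0" "C b1 > 0" "solL C t y1" "solL C t y2"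
  shows "y1 = y2"
proof -
  have t: "t > 0" using assms(4) by (simp add: solL_def)
  have "(\<Sum>b\<in>Am. (C b * t ^ nat (h b) * exp (rv b \<bullet> y1)) * exp (rv b \<bullet> (y2 - y1)))
     = (\<Sum>a\<in>Ap. (C a * exp (rv a \<bullet> y1)) * exp (rv a \<bullet> (y2 - y1)))"
    unfolding shift_sum using assms(5) by (simp add: solL_def g_def)
  then have "y2 - y1 = 0"
    by (rule keyB[rotated 5]) (use assms t sol_parts[OF assms(4)] b1 in auto)
  then show ?thesis by simp
qed

end



context setup4 begin

lemma hull_sum_bound:
  assumes "z \<in> convex hull (rv ` Ap)"
  shows "exp (z \<bullet> y) \<le> (\<Sum>a\<in>Ap. exp (rv a \<bullet> y))"
proof -
  have "exp (z \<bullet> y) \<le> 0 \<bullet> z + (\<Sum>a\<in>Ap. exp (rv a \<bullet> y))"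
  proof (rule hull_exp_le[OF assms])
    show "\<forall>v\<in>rv ` Ap. exp (v \<bullet> y) \<le> 0 \<bullet> v + (\<Sum>a\<in>Ap. exp (rv a \<bullet> y))"
      using finAp by (auto intro!: member_le_sum)
  qed
  then show ?thesis by simp
qed

lemma Spos: "(\<Sum>a\<in>Ap. exp (rv a \<bullet> y)) > 0"
  using finAp neAp by (intro sum_pos) auto

lemma hull_eq: "convex hull (rv ` (Ap \<union> Am)) = convex hull (rv ` Ap)"
proof
  show "convex hull rv ` (Ap \<union> Am) \<subseteq> convex hull rv ` Ap"
    by (rule hull_minimal) (use Am_hull in \<open>auto intro: hull_inc simp: convex_convex_hull\<close>)
  show "convex hull rv ` Ap \<subseteq> convex hull rv ` (Ap \<union> Am)"
    by (rule hull_mono) auto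
qed

lemma radius: "\<exists>r>0. \<forall>b\<in>Am. cball (rv b) r \<subseteq> convex hull (rv ` Ap)"
proof -
  have "aff_dim (convex hull (rv ` Ap)) = DIM(real^'n)"
    using fd hull_eq by (simp add: full_dimensional_def)
  then have "affine hull (convex hull (rv ` Ap)) = UNIV"
    using aff_dim_eq_full by blast
  then have ri: "rel_interior (convex hull (rv ` Ap)) = interior (convex hull (rv ` Ap))"
    by (rule rel_interior_interior)
  have "\<forall>b\<in>Am. \<exists>e>0. cball (rv b) e \<subseteq> convex hull (rv ` Ap)"
  proof
    fix b assume "b \<in> Am"
    then have "rv b \<in> interior (convex hull (rv ` Ap))"
      using ns ri by (auto simp: nonseparable_def)
    then obtain e where "e > 0" "cball (rv b) e \<subseteq> interior (convex hull (rv ` Ap))"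
      using open_contains_cball[of "interior (convex hull (rv ` Ap))"] by blast
    then show "\<exists>e>0. cball (rv b) e \<subseteq> convex hull (rv ` Ap)"
      using interior_subset by blast
  qed
  then obtain ef where ef: "\<forall>b\<in>Am. ef b > 0 \<and> cball (rv b) (ef b) \<subseteq> convex hull (rv ` Ap)"
    by metis
  define r where "r = Min (ef ` Am)"
  have "r > 0" unfolding r_def using finAm b1 ef by (subst Min_gr_iff) auto
  moreover have "\<forall>b\<in>Am. cball (rv b) r \<subseteq> convex hull (rv ` Ap)"
  proof
    fix b assume b: "b \<in> Am"
    then have "r \<le> ef b" unfolding r_def using finAm by auto
    then have "cball (rv b) r \<subseteq> cball (rv b) (ef b)" by (rule subset_cball)
    then show "cball (rv b) r \<subseteq> convex hull (rv ` Ap)" using ef b by blast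
  qed
  ultimately show ?thesis by blast
qed

lemma coer_bound:
  assumes r: "r > 0" "\<forall>b\<in>Am. cball (rv b) r \<subseteq> convex hull (rv ` Ap)" and b: "b \<in> Am"
  shows "exp (rv b \<bullet> y) * exp (r * norm y) \<le> (\<Sum>a\<in>Ap. exp (rv a \<bullet> y))"
proof (cases "y = 0")
  case True
  have "1 \<le> real (card Ap)" using finAp neAp by (simp add: Suc_le_eq card_gt_0_iff)
  then show ?thesis using True by simp
next
  case False
  define z where "z = rv b + (r / norm y) *\<^sub>R y"
  have "dist (rv b) z = r" using False r(1) by (simp add: z_def dist_norm)
  then have "z \<in> cball (rv b) r" by simp
  then have "z \<in> convex hull (rv ` Ap)" using r(2) b by blast
  then have "exp (z \<bullet> y) \<le> (\<Sum>a\<in>Ap. exp (rv a \<bullet> y))" by (rule hull_sum_bound)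
  moreover have "z \<bullet> y = rv b \<bullet> y + r * norm y"
    using False by (simp add: z_def inner_add_left power2_norm_eq_inner[symmetric] power2_eq_square)
  ultimately show ?thesis by (simp add: exp_add)
qed

definition okC :: "(int ^ 'n \<Rightarrow> real) \<Rightarrow> real \<Rightarrow> real \<Rightarrow> real \<Rightarrow> bool" where
  "okC C cm K \<kappa> \<longleftrightarrow> (\<forall>a\<in>Ap. cm \<le> C a \<and> C a \<le> K) \<and> (\<forall>b\<in>Am. 0 \<le> C b \<and> C b \<le> K) \<and> \<kappa> \<le> C b1"

lemma okC_K: "okC C cm K \<kappa> \<Longrightarrow> cm \<le> K"
  using neAp by (force simp: okC_def)

lemma P_lower:
  assumes "okC C cm K \<kappa>"
  shows "cm * (\<Sum>a\<in>Ap. exp (rv a \<bullet> y)) \<le> (\<Sum>a\<in>Ap. C a * exp (rv a \<bullet> y))"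
  unfolding sum_distrib_left
  by (rule sum_mono) (use assms in \<open>auto simp: okC_def intro: mult_right_mono\<close>)

lemma small_t:
  assumes ok: "okC C cm K \<kappa>" and cm: "cm > 0" and t: "0 < t" "t < min 1 (cm / (real (card Am) * K + 1))"
  shows "g C t y > 0"
proof -
  define S where "S = (\<Sum>a\<in>Ap. exp (rv a \<bullet> y))"
  have S: "S > 0" unfolding S_def by (rule Spos)
  have K: "K > 0" using okC_K[OF ok] cm by simp
  have "(\<Sum>b\<in>Am. C b * t ^ nat (h b) * exp (rv b \<bullet> y)) \<le> (\<Sum>b\<in>Am. K * t * S)"
  proof (rule sum_mono)
    fix b assume b: "b \<in> Am"
    have "t ^ nat (h b) \<le> t ^ 1"
      using t hB[OF b] by (intro power_decreasing) auto
    then have "C b * t ^ nat (h b) \<le> K * t"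
      using ok b t by (intro mult_mono) (auto simp: okC_def)
    moreover have "exp (rv b \<bullet> y) \<le> S"
      unfolding S_def by (rule hull_sum_bound[OF Am_hull[OF b]])
    ultimately show "C b * t ^ nat (h b) * exp (rv b \<bullet> y) \<le> K * t * S"
      by (rule mult_mono) (use K t in auto)
  qed
  also have "\<dots> = real (card Am) * K * t * S" by simp
  also have "\<dots> < cm * S"
  proof -
    have "real (card Am) * K + 1 > 0" using K by (simp add: add_nonneg_pos)
    then have "t * (real (card Am) * K + 1) < cm" using t by (simp add: less_divide_eq)
    then have "real (card Am) * K * t < cm" using t by (simp add: algebra_simps)
    then show ?thesis using S by simp
  qed
  also have "\<dots> \<le> (\<Sum>a\<in>Ap. C a * exp (rv a \<bullet> y))"
    unfolding S_def by (rule P_lower[OF ok])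
  finally show ?thesis by (simp add: g_def)
qed

lemma large_t:
  assumes ok: "okC C cm K \<kappa>" and kp: "\<kappa> > 0" and t: "max 1 (real (card Ap) * K / \<kappa>) + 1 \<le> t"
  shows "g C t 0 < 0"
proof -
  have "(\<Sum>a\<in>Ap. C a) \<le> real (card Ap) * K"
    by (rule sum_bounded_above) (use ok in \<open>auto simp: okC_def\<close>)
  also have "\<dots> < \<kappa> * t"
  proof -
    have "real (card Ap) * K / \<kappa> < t" using t by simp
    then show ?thesis using kp by (simp add: divide_less_eq mult.commute)
  qed
  also have "\<dots> \<le> C b1 * t ^ nat (h b1)"
  proof (rule mult_mono)
    show "\<kappa> \<le> C b1" using ok by (simp add: okC_def)
    have "t ^ 1 \<le> t ^ nat (h b1)" using t hB[OF b1] by (intro power_increasing) auto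
    then show "t \<le> t ^ nat (h b1)" by simp
  qed (use kp t ok in \<open>auto simp: okC_def\<close>)
  also have "\<dots> \<le> (\<Sum>b\<in>Am. C b * t ^ nat (h b))"
    using ok t b1 finAm by (intro member_le_sum) (auto simp: okC_def)
  finally show ?thesis by (simp add: g_def)
qed

lemma coercive:
  assumes ok: "okC C cm K \<kappa>" and cm: "cm > 0"
    and r: "r > 0" "\<forall>b\<in>Am. cball (rv b) r \<subseteq> convex hull (rv ` Ap)"
    and t: "0 < t" "t \<le> T" and T: "1 \<le> T" and gle: "g C t y \<le> 0"
  shows "norm y \<le> ln (real (card Am) * K * (\<Sum>b\<in>Am. T ^ nat (h b)) / cm) / r"
proof -
  define S where "S = (\<Sum>a\<in>Ap. exp (rv a \<bullet> y))"
  have S: "S > 0" unfolding S_def by (rule Spos)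
  have K: "K > 0" using okC_K[OF ok] cm by simp
  define B where "B = (\<Sum>b\<in>Am. T ^ nat (h b))"
  define Kq where "Kq = real (card Am) * K * B"
  define q where "q = exp (- (r * norm y))"
  have q: "q > 0" by (simp add: q_def)
  have "(\<Sum>a\<in>Ap. C a * exp (rv a \<bullet> y)) \<le> (\<Sum>b\<in>Am. C b * t ^ nat (h b) * exp (rv b \<bullet> y))"
    using gle by (simp add: g_def)
  also have "\<dots> \<le> (\<Sum>b\<in>Am. K * B * (S * q))"
  proof (rule sum_mono)
    fix b assume b: "b \<in> Am"
    have "t ^ nat (h b) \<le> T ^ nat (h b)" using t by (intro power_mono) auto
    also have "\<dots> \<le> B" unfolding B_def using finAm b T by (intro member_le_sum) auto
    finally have "C b * t ^ nat (h b) \<le> K * B"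
      using ok b t by (intro mult_mono) (auto simp: okC_def)
    moreover have "exp (rv b \<bullet> y) \<le> S * q"
    proof -
      have "exp (rv b \<bullet> y) * exp (r * norm y) \<le> S"
        unfolding S_def by (rule coer_bound[OF r b])
      then have "exp (rv b \<bullet> y) \<le> S / exp (r * norm y)" by (simp add: le_divide_eq)
      then show ?thesis by (simp add: q_def exp_minus divide_inverse)
    qed
    moreover have "B \<ge> 0" unfolding B_def using T by (intro sum_nonneg) auto
    ultimately show "C b * t ^ nat (h b) * exp (rv b \<bullet> y) \<le> K * B * (S * q)"
      using K by (intro mult_mono[of "C b * t ^ nat (h b)"]) auto
  qed
  also have "\<dots> = Kq * q * S" by (simp add: Kq_def)
  finally have "cm * S \<le> Kq * q * S" using P_lower[OF ok, of y] unfolding S_def by linarith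
  then have "cm \<le> Kq * q" using S by simp
  then have "cm * exp (r * norm y) \<le> Kq" by (simp add: q_def exp_minus field_simps)
  then have "exp (r * norm y) \<le> Kq / cm" using cm by (simp add: le_divide_eq mult.commute)
  moreover have "Kq / cm > 0" using \<open>cm \<le> Kq * q\<close> cm q
    by (metis divide_pos_pos less_le_trans zero_less_mult_pos2)
  ultimately have "r * norm y \<le> ln (Kq / cm)" by (simp add: ln_ge_iff)
  then show ?thesis using r by (simp add: Kq_def B_def pos_le_divide_eq mult.commute)
qed

end



context setup4 begin

lemma g_cont: "continuous_on UNIV (\<lambda>z. g C (fst z) (snd z))"
  unfolding g_def by (intro continuous_intros)

lemma g_cont_t: "isCont (\<lambda>t. g C t y) t0"
  unfolding g_def by (intro continuous_intros)

lemma fermat_crit: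
  assumes nn: "\<forall>y. g C t y \<ge> 0" and g0: "g C t y0 = 0"
  shows "crit_sys Ap Am (star_pow C t h) (E y0) = 0"
proof -
  define x where "x = E y0"
  have xpos: "\<forall>j. x $ j > 0" by (simp add: x_def E_pos)
  have fx: "fpoly Ap Am (star_pow C t h) x = 0" using g0 by (simp add: x_def fpoly_E)
  have "xi_dfpoly Ap Am (star_pow C t h) x i = 0" for i
  proof -
    define \<phi> where "\<phi> = (\<lambda>z. fpoly Ap Am (star_pow C t h) (\<chi> j. if j = i then z else x$j))"
    have xi: "x $ i \<noteq> 0" using xpos by (metis less_irrefl)
    obtain l where l: "(\<phi> has_real_derivative l) (at (x$i))"
      using fpoly_deriv[OF xi] unfolding \<phi>_def by blast
    have "\<phi> (x$i) = 0"
    proof -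
      have "(\<chi> j. if j = i then x$i else x$j) = x" by (simp add: vec_eq_iff)
      then show ?thesis using fx by (simp add: \<phi>_def)
    qed
    moreover have "\<forall>z. \<bar>x$i - z\<bar> < x$i \<longrightarrow> \<phi> (x$i) \<le> \<phi> z"
    proof (intro allI impI)
      fix z assume "\<bar>x$i - z\<bar> < x$i"
      then have z: "z > 0" by linarith
      define v where "v = (\<chi> j. if j = i then z else x$j)"
      have vpos: "\<forall>j. v $ j > 0" using z xpos by (simp add: v_def)
      have "\<phi> z = fpoly Ap Am (star_pow C t h) (E (Lg v))"
        using E_Lg[OF vpos] by (simp add: \<phi>_def v_def)
      also have "\<dots> = g C t (Lg v)" by (rule fpoly_E)
      finally show "\<phi> (x$i) \<le> \<phi> z" using nn \<open>\<phi> (x$i) = 0\<close> by simp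
    qed
    ultimately have "l = 0" using DERIV_local_min[OF l, of "x$i"] xpos by auto
    then have "deriv \<phi> (x$i) = 0" using DERIV_imp_deriv[OF l] by simp
    then show ?thesis unfolding xi_dfpoly_def \<phi>_def by simp
  qed
  then show ?thesis using fx unfolding crit_sys_def x_def by (simp add: vec_eq_iff zero_prod_def)
qed

lemma exist:
  assumes tlo: "0 < tlo" "tlo \<le> thi"
   and small: "\<forall>t y. 0 < t \<and> t < tlo \<longrightarrow> g C t y > 0"
   and large: "g C thi 0 < 0"
   and coer: "\<forall>t y. 0 < t \<and> t \<le> thi \<and> g C t y \<le> 0 \<longrightarrow> norm y \<le> R"
  shows "\<exists>t y. solL C t y \<and> tlo \<le> t \<and> t \<le> thi \<and> norm y \<le> R"
proof -
  define Z where "Z = ({tlo..thi} \<times> cball (0::real^'n) R) \<inter> {z. g C (fst z) (snd z) \<le> 0}"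
  have cZ: "compact Z" unfolding Z_def
    by (intro compact_Int_closed compact_Times compact_Icc compact_cball closed_Collect_le g_cont continuous_on_const)
  have "norm (0::real^'n) \<le> R" using coer[rule_format, of thi 0] large tlo by linarith
  then have "(thi, 0) \<in> Z" using large tlo by (auto simp: Z_def)
  then have "Z \<noteq> {}" by blast
  from continuous_attains_inf[OF cZ this continuous_on_fst[OF continuous_on_id]]
  obtain z where z: "z \<in> Z" "\<forall>z'\<in>Z. fst z \<le> fst z'" by auto
  obtain ts ys where zs: "z = (ts, ys)" by (cases z)
  have ts: "tlo \<le> ts" "ts \<le> thi" "norm ys \<le> R" "g C ts ys \<le> 0" using z(1) zs by (auto simp: Z_def)
  have nn: "\<forall>y. g C ts y \<ge> 0"
  proof (rule ccontr)
    assume "\<not> (\<forall>y. g C ts y \<ge> 0)"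
    then obtain y where y: "g C ts y < 0" by (auto simp: not_le)
    have "isCont (\<lambda>t. g C t y) ts" by (rule g_cont_t)
    then have "(\<lambda>t. g C t y) \<midarrow>ts\<rightarrow> g C ts y" by (simp add: isCont_def)
    from LIM_fun_less_zero[OF this y] obtain d where d: "d > 0"
      "\<forall>x. x \<noteq> ts \<and> \<bar>ts - x\<bar> < d \<longrightarrow> g C x y < 0" by blast
    define t' where "t' = ts - min (d/2) (ts/2)"
    have t': "0 < t'" "t' < ts" "\<bar>ts - t'\<bar> < d" using d ts tlo by (auto simp: t'_def)
    then have gt': "g C t' y < 0" using d by auto
    show False
    proof (cases "t' < tlo")
      case True then show False using small[rule_format, of t' y] t' gt' by linarith
    next
      case False
      then have "norm y \<le> R" using coer[rule_format, of t' y] t' ts gt' by linarith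
      then have "(t', y) \<in> Z" using False t' ts gt' by (auto simp: Z_def)
      then show False using z(2) zs t' by force
    qed
  qed
  then have g0: "g C ts ys = 0" using ts(4) by (simp add: order_antisym)
  have "crit_sys Ap Am (star_pow C ts h) (E ys) = 0" by (rule fermat_crit[OF nn g0])
  then have "solL C ts ys" using crit_E ts tlo by (simp add: solL_def)
  then show ?thesis using ts by blast
qed

end



lemma cc_bounds:
  fixes s x y :: real assumes "0 \<le> s" "s \<le> 1"
  shows "min x y \<le> s*x + (1-s)*y" "s*x + (1-s)*y \<le> max x y"
proof -
  have "s * min x y \<le> s * x" by (rule mult_left_mono) (auto simp: assms)
  moreover have "(1-s) * min x y \<le> (1-s) * y" by (rule mult_left_mono) (auto simp: assms)
  moreover have "s * min x y + (1-s) * min x y = min x y" by (simp add: algebra_simps)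
  ultimately show "min x y \<le> s*x + (1-s)*y" by linarith
next
  have "s * x \<le> s * max x y" by (rule mult_left_mono) (auto simp: assms)
  moreover have "(1-s) * y \<le> (1-s) * max x y" by (rule mult_left_mono) (auto simp: assms)
  moreover have "s * max x y + (1-s) * max x y = max x y" by (simp add: algebra_simps)
  ultimately show "s*x + (1-s)*y \<le> max x y" by linarith
qed

lemma E_cont: "continuous_on UNIV E"
  unfolding E_def by (intro continuous_intros)

locale setup5 = setup4 Ap Am h lam b1
  for Ap Am :: "(int ^ 'n::finite) set" and h lam b1 +
  fixes c :: "int ^ 'n \<Rightarrow> real"
  assumes cpos: "\<forall>a\<in>Ap \<union> Am. c a > 0"
begin

definition Cs where
  "Cs s = (\<lambda>a. s * c a + (1 - s) * (if a \<in> Ap then lam a else if a = b1 then 1 else 0))"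

definition cm where "cm = Min ((\<lambda>a. min (c a) (lam a)) ` Ap)"
definition KK where "KK = Max ((\<lambda>a. max (c a) (lam a)) ` Ap \<union> (\<lambda>b. max (c b) 1) ` Am)"
definition kp where "kp = min (c b1) 1"

lemma cm_pos: "cm > 0"
  unfolding cm_def using finAp neAp cpos lam_pos by (subst Min_gr_iff) auto

lemma kp_pos: "kp > 0"
  unfolding kp_def using cpos b1 by auto

lemma okCs: assumes "0 \<le> s" "s \<le> 1" shows "okC (Cs s) cm KK kp"
  unfolding okC_def
proof (intro conjI ballI)
  fix a assume a: "a \<in> Ap"
  have "cm \<le> min (c a) (lam a)" unfolding cm_def using finAp a by (intro Min_le) auto
  also have "\<dots> \<le> Cs s a" using a cc_bounds(1)[OF assms] by (simp add: Cs_def)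
  finally show "cm \<le> Cs s a" .
  have "Cs s a \<le> max (c a) (lam a)" using a cc_bounds(2)[OF assms] by (simp add: Cs_def)
  also have "\<dots> \<le> KK" unfolding KK_def using finAp finAm a by (intro Max_ge) auto
  finally show "Cs s a \<le> KK" .
next
  fix b assume b: "b \<in> Am"
  then have nb: "b \<notin> Ap" using disj by auto
  have cb: "c b > 0" using cpos b by auto
  show "0 \<le> Cs s b" using nb cb assms by (simp add: Cs_def)
  have "Cs s b \<le> max (c b) 1"
  proof (cases "b = b1")
    case True then show ?thesis using nb cc_bounds(2)[OF assms, of "c b" 1] by (simp add: Cs_def)
  next
    case False
    have "s * c b \<le> 1 * c b" using assms cb by (intro mult_right_mono) auto
    then show ?thesis using nb False by (simp add: Cs_def)
  qed
  also have "\<dots> \<le> KK" unfolding KK_def using finAp finAm b by (intro Max_ge) auto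
  finally show "Cs s b \<le> KK" .
next
  have nb: "b1 \<notin> Ap" using disj b1 by auto
  show "kp \<le> Cs s b1" using nb cc_bounds(1)[OF assms, of "c b1" 1] by (simp add: Cs_def kp_def)
qed

lemma Cs_pos:
  assumes "0 \<le> s" "s \<le> 1"
  shows "\<forall>a\<in>Ap. Cs s a > 0" "\<forall>b\<in>Am. Cs s b \<ge> 0" "Cs s b1 > 0"
  using okCs[OF assms] cm_pos kp_pos by (force simp: okC_def)+

lemma uniq:
  assumes "0 \<le> s" "s \<le> 1" "solL (Cs s) t1 y1" "solL (Cs s) t2 y2"
  shows "t1 = t2 \<and> y1 = y2"
proof -
  have "t1 = t2" using Cs_pos[OF assms(1,2)] assms(3,4)
    by (intro sol_unique_t[of "Cs s"]) (auto intro: less_imp_le)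
  then show ?thesis using Cs_pos[OF assms(1,2)] assms(3,4) sol_unique_y[of "Cs s" t1 y1 y2] by auto
qed

lemma consts_exist:
  "\<exists>tlo thi R. 0 < tlo \<and> tlo \<le> thi \<and> (\<forall>s. 0 \<le> s \<and> s \<le> 1 \<longrightarrow>
      (\<exists>t y. solL (Cs s) t y \<and> tlo \<le> t \<and> t \<le> thi \<and> norm y \<le> R))"
proof -
  obtain r where r: "r > 0" "\<forall>b\<in>Am. cball (rv b) r \<subseteq> convex hull (rv ` Ap)" using radius by blast
  define tlo where "tlo = min 1 (cm / (real (card Am) * KK + 1))"
  define thi where "thi = max 1 (real (card Ap) * KK / kp) + 1"
  define R where "R = ln (real (card Am) * KK * (\<Sum>b\<in>Am. thi ^ nat (h b)) / cm) / r"
  have KK: "KK > 0" using okC_K[OF okCs[of 0]] cm_pos by simp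
  have "real (card Am) * KK + 1 > 0" using KK by (simp add: add_nonneg_pos)
  then have tlo: "0 < tlo" "tlo \<le> thi" using cm_pos KK by (auto simp: tlo_def thi_def)
  have "\<exists>t y. solL (Cs s) t y \<and> tlo \<le> t \<and> t \<le> thi \<and> norm y \<le> R" if s: "0 \<le> s" "s \<le> 1" for s
  proof (rule exist[OF tlo])
    show "\<forall>t y. 0 < t \<and> t < tlo \<longrightarrow> g (Cs s) t y > 0"
      using small_t[OF okCs[OF s] cm_pos] by (simp add: tlo_def)
    show "g (Cs s) thi 0 < 0"
      by (rule large_t[OF okCs[OF s] kp_pos]) (simp add: thi_def)
    show "\<forall>t y. 0 < t \<and> t \<le> thi \<and> g (Cs s) t y \<le> 0 \<longrightarrow> norm y \<le> R"
      using coercive[OF okCs[OF s] cm_pos r, of _ thi] by (auto simp: R_def thi_def)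
  qed
  then show ?thesis using tlo by blast
qed

end



context setup5 begin

lemma sol0: "solL (Cs 0) 1 0"
proof -
  have Cs0A: "a \<in> Ap \<Longrightarrow> Cs 0 a = lam a" for a by (simp add: Cs_def)
  have Cs0B: "b \<in> Am \<Longrightarrow> Cs 0 b = (if b = b1 then 1 else 0)" for b using disj by (auto simp: Cs_def)
  have s1: "(\<Sum>b\<in>Am. Cs 0 b * 1 ^ nat (h b) * exp (rv b \<bullet> 0)) = 1"
  proof -
    have "(\<Sum>b\<in>Am. Cs 0 b * 1 ^ nat (h b) * exp (rv b \<bullet> 0)) = (\<Sum>b\<in>Am. if b = b1 then 1 else 0)"
      by (rule sum.cong) (auto simp: Cs0B)
    also have "\<dots> = 1" using finAm b1 by simp
    finally show ?thesis .
  qed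
  have s2: "(\<Sum>b\<in>Am. (Cs 0 b * 1 ^ nat (h b) * exp (rv b \<bullet> 0)) *\<^sub>R rv b) = rv b1"
  proof -
    have "(\<Sum>b\<in>Am. (Cs 0 b * 1 ^ nat (h b) * exp (rv b \<bullet> 0)) *\<^sub>R rv b) = (\<Sum>b\<in>Am. if b = b1 then rv b else 0)"
      by (rule sum.cong) (auto simp: Cs0B)
    also have "\<dots> = rv b1" using finAm b1 by simp
    finally show ?thesis .
  qed
  have s3: "(\<Sum>a\<in>Ap. Cs 0 a * exp (rv a \<bullet> 0)) = 1"
    using lam_sum by (simp add: Cs0A)
  have s4: "(\<Sum>a\<in>Ap. (Cs 0 a * exp (rv a \<bullet> 0)) *\<^sub>R rv a) = rv b1"
    using lam_b1 by (simp add: Cs0A)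
  show ?thesis unfolding solL_def g_def grad_def using s1 s2 s3 s4 by simp
qed

lemma G_cont: "continuous_on UNIV (\<lambda>w::real \<times> real \<times> (real^'n). (g (Cs (fst w)) (fst (snd w)) (snd (snd w)), grad (Cs (fst w)) (fst (snd w)) (snd (snd w))))"
  unfolding g_def grad_def Cs_def by (intro continuous_intros)

lemma path_exists:
  "\<exists>pL tlo. tlo > 0 \<and> continuous_on {0..1} pL \<and> (\<forall>s\<in>{0..1}. solL (Cs s) (fst (pL s)) (snd (pL s)) \<and> tlo \<le> fst (pL s))"
proof -
  obtain tlo thi R where c: "0 < tlo" "tlo \<le> thi" "\<forall>s. 0 \<le> s \<and> s \<le> 1 \<longrightarrow>
      (\<exists>t y. solL (Cs s) t y \<and> tlo \<le> t \<and> t \<le> thi \<and> norm y \<le> R)"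
    using consts_exist by blast
  define pL where "pL s = (THE z. solL (Cs s) (fst z) (snd z))" for s
  have pLs: "solL (Cs s) (fst (pL s)) (snd (pL s)) \<and> tlo \<le> fst (pL s) \<and> fst (pL s) \<le> thi \<and> norm (snd (pL s)) \<le> R"
    if s: "s \<in> {0..1}" for s
  proof -
    obtain t y where ty: "solL (Cs s) t y" "tlo \<le> t" "t \<le> thi" "norm y \<le> R" using c(3) s by auto
    have "pL s = (t, y)" unfolding pL_def
    proof (rule the_equality)
      fix z assume "solL (Cs s) (fst z) (snd z)"
      then show "z = (t, y)" using uniq[of s "fst z" "snd z" t y] ty s by (cases z) auto
    qed (use ty in simp)
    then show ?thesis using ty by simp
  qed
  define T where "T = {tlo..thi} \<times> cball (0::real^'n) R"
  define G where "G = (\<lambda>w::real \<times> real \<times> (real^'n). (g (Cs (fst w)) (fst (snd w)) (snd (snd w)), grad (Cs (fst w)) (fst (snd w)) (snd (snd w))))"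
  have graph: "(\<lambda>x. (x, pL x)) ` {0..1} = ({0..1} \<times> T) \<inter> {w. G w = 0}"
  proof
    show "(\<lambda>x. (x, pL x)) ` {0..1} \<subseteq> ({0..1} \<times> T) \<inter> {w. G w = 0}"
    proof
      fix w assume "w \<in> (\<lambda>x. (x, pL x)) ` {0..1}"
      then obtain s where s: "s \<in> {0..1}" "w = (s, pL s)" by auto
      then show "w \<in> ({0..1} \<times> T) \<inter> {w. G w = 0}"
        using pLs[OF s(1)] by (auto simp: T_def G_def solL_def zero_prod_def mem_Times_iff)
    qed
    show "({0..1} \<times> T) \<inter> {w. G w = 0} \<subseteq> (\<lambda>x. (x, pL x)) ` {0..1}"
    proof
      fix w assume w: "w \<in> ({0..1} \<times> T) \<inter> {w. G w = 0}"
      obtain s t y where wst: "w = (s, t, y)" by (cases w) auto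
      have s: "s \<in> {0..1}" and t: "tlo \<le> t" using w wst by (auto simp: T_def)
      have "solL (Cs s) t y" using w wst t c(1) by (auto simp: G_def solL_def zero_prod_def)
      then have "(t, y) = pL s" using uniq[of s t y "fst (pL s)" "snd (pL s)"] pLs[OF s] s by auto
      then show "w \<in> (\<lambda>x. (x, pL x)) ` {0..1}" using wst s by force
    qed
  qed
  have "continuous_on {0..1} pL"
  proof (rule continuous_from_closed_graph[of T])
    show "compact T" unfolding T_def by (intro compact_Times compact_Icc compact_cball)
    show "pL \<in> {0..1} \<rightarrow> T" using pLs by (auto simp: T_def mem_Times_iff)
    show "closed ((\<lambda>x. (x, pL x)) ` {0..1})" unfolding graph
      by (intro closed_Int closed_Times closed_atLeastAtMost closed_Collect_eq continuous_on_const)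
         (auto simp: T_def G_def intro: G_cont closed_Times closed_atLeastAtMost closed_cball)
  qed
  then show ?thesis using pLs c(1) by blast
qed

end

theorem theorem4p5:
  fixes Ap Am :: "(int ^ 'n) set"
    and h :: "int ^ 'n \<Rightarrow> int"
    and c lam :: "int ^ 'n \<Rightarrow> real"
    and b1 :: "int ^ 'n"
  assumes "finite Ap" "finite Am" "Ap \<noteq> {}" "Am \<noteq> {}" "Ap \<inter> Am = {}"
    and "full_dimensional (Ap \<union> Am)"
    and "nonseparable Ap Am"
    and "lifts Ap Am h"
    and "\<forall>a\<in>Ap \<union> Am. c a > 0"
    and "b1 \<in> Am"
    and "\<forall>a\<in>Ap. lam a > 0" "(\<Sum>a\<in>Ap. lam a) = 1"
    and "(\<Sum>a\<in>Ap. lam a *\<^sub>R rv a) = rv b1"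
  defines "H \<equiv> (\<lambda>s (t, x). crit_sys Ap Am (star_pow (\<lambda>a. s * c a + (1 - s) * (if a \<in> Ap then lam a else if a = b1 then 1 else 0)) t h) x)"
    and "S \<equiv> {t::real. t > 0 \<and> (\<exists>x::real ^ 'n. (\<forall>i. x $ i > 0) \<and> crit_sys Ap Am (star_pow c t h) x = 0)}"
  shows "H 0 (1, \<chi> i. 1) = 0 \<and>
    (\<exists>p :: real \<Rightarrow> real \<times> (real ^ 'n).
       (continuous_on {0..1} p \<and> (\<forall>s\<in>{0..1}. fst (p s) > 0 \<and> (\<forall>i. snd (p s) $ i > 0)) \<and>
        p 0 = (1, \<chi> i. 1) \<and> (\<forall>s\<in>{0..1}. H s (p s) = 0)) \<and>
       (\<forall>q :: real \<Rightarrow> real \<times> (real ^ 'n).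
          (continuous_on {0..1} q \<and> (\<forall>s\<in>{0..1}. fst (q s) > 0 \<and> (\<forall>i. snd (q s) $ i > 0)) \<and>
           q 0 = (1, \<chi> i. 1) \<and> (\<forall>s\<in>{0..1}. H s (q s) = 0)) \<longrightarrow> (\<forall>s\<in>{0..1}. q s = p s)) \<and>
       S = {fst (p 1)})"
proof -
  interpret setup5 Ap Am h lam b1 c
    by unfold_locales (use assms in auto)
  have Hs: "H s (t, x) = crit_sys Ap Am (star_pow (Cs s) t h) x" for s t x
    unfolding H_def Cs_def by simp
  obtain pL tlo where P: "tlo > 0" "continuous_on {0..1} pL"
    "\<forall>s\<in>{0..1}. solL (Cs s) (fst (pL s)) (snd (pL s)) \<and> tlo \<le> fst (pL s)"
    using path_exists by blast
  define p where "p s = (fst (pL s), E (snd (pL s)))" for s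
  have crit_sol: "crit_sys Ap Am (star_pow (Cs s) t h) (E y) = 0" if "solL (Cs s) t y" for s t y
    using crit_E that by (simp add: solL_def)
  have sol_crit: "solL (Cs s) t (Lg x)"
    if "t > 0" "\<forall>i. x $ i > 0" "crit_sys Ap Am (star_pow (Cs s) t h) x = 0" for s t x
    using that crit_E[of "Cs s" t "Lg x"] E_Lg[OF that(2)] by (simp add: solL_def)
  have H0: "H 0 (1, \<chi> i. 1) = 0"
    using crit_sol[OF sol0, unfolded E_0] Hs by simp
  have pL0: "pL 0 = (1, 0)"
    using uniq[of 0 1 0 "fst (pL 0)" "snd (pL 0)"] sol0 P(3) by (simp add: prod_eq_iff)
  have cE: "continuous_on {0..1} (\<lambda>s. E (snd (pL s)))"
    by (rule continuous_on_compose2[OF E_cont continuous_on_snd[OF P(2)]]) auto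
  have pcont: "continuous_on {0..1} p"
    unfolding p_def by (intro continuous_on_Pair continuous_on_fst P(2) cE)
  have ppos: "\<forall>s\<in>{0..1}. fst (p s) > 0 \<and> (\<forall>i. snd (p s) $ i > 0)"
    using P(1,3) E_pos by (force simp: p_def)
  have p0: "p 0 = (1, \<chi> i. 1)" using pL0 E_0 by (simp add: p_def)
  have Hp: "\<forall>s\<in>{0..1}. H s (p s) = 0"
    using P(3) crit_sol Hs by (simp add: p_def)
  have same: "(t, x) = p s" if s: "s \<in> {0..1}" and t: "t > 0" "\<forall>i. x $ i > 0"
      and crit: "crit_sys Ap Am (star_pow (Cs s) t h) x = 0" for s t x
  proof -
    have "solL (Cs s) t (Lg x)" by (rule sol_crit[OF t crit])
    then have "t = fst (pL s) \<and> Lg x = snd (pL s)"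
      using uniq[of s t "Lg x" "fst (pL s)" "snd (pL s)"] P(3) s by auto
    then show ?thesis using E_Lg[OF t(2)] by (auto simp: p_def)
  qed
  have quniq: "\<forall>q :: real \<Rightarrow> real \<times> (real ^ 'n).
          (continuous_on {0..1} q \<and> (\<forall>s\<in>{0..1}. fst (q s) > 0 \<and> (\<forall>i. snd (q s) $ i > 0)) \<and>
           q 0 = (1, \<chi> i. 1) \<and> (\<forall>s\<in>{0..1}. H s (q s) = 0)) \<longrightarrow> (\<forall>s\<in>{0..1}. q s = p s)"
  proof (intro allI impI ballI)
    fix q :: "real \<Rightarrow> real \<times> (real ^ 'n)" and s :: real
    assume q: "continuous_on {0..1} q \<and> (\<forall>s\<in>{0..1}. fst (q s) > 0 \<and> (\<forall>i. snd (q s) $ i > 0)) \<and>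
           q 0 = (1, \<chi> i. 1) \<and> (\<forall>s\<in>{0..1}. H s (q s) = 0)" and s: "s \<in> {0..1}"
    obtain t x where tx: "q s = (t, x)" by (cases "q s")
    have "t > 0" "\<forall>i. x $ i > 0" "H s (t, x) = 0" using q s tx by (metis fst_conv snd_conv)+
    then show "q s = p s" using same[OF s] Hs tx by simp
  qed
  have C1: "Cs 1 = c" by (simp add: Cs_def fun_eq_iff)
  have Seq: "S = {fst (p 1)}"
  proof
    show "S \<subseteq> {fst (p 1)}"
    proof
      fix t assume "t \<in> S"
      then obtain x where "t > 0" "\<forall>i. x $ i > 0" "crit_sys Ap Am (star_pow (Cs 1) t h) x = 0"
        unfolding S_def C1 by blast
      then have "(t, x) = p 1" using same[of 1 t x] by simp
      then show "t \<in> {fst (p 1)}" by (metis fst_conv singletonI)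
    qed
    show "{fst (p 1)} \<subseteq> S"
    proof -
      have "fst (p 1) > 0" "\<forall>i. snd (p 1) $ i > 0" using ppos by auto
      moreover have "crit_sys Ap Am (star_pow c (fst (p 1)) h) (snd (p 1)) = 0"
        using Hp Hs[of 1 "fst (p 1)" "snd (p 1)"] C1 by simp
      ultimately show ?thesis unfolding S_def by blast
    qed
  qed
  show ?thesis
    using H0 pcont ppos p0 Hp quniq Seq by blast
qed

end
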